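(* Let $c_*=\frac{9e}{4\sqrt2\pi}$ and $0\leq\varepsilon<1$. Then for all real $t$ with $|t|>4e$, $$\left|\frac{\Gamma(1+it+\varepsilon)}{\Gamma(1+it/2+\varepsilon)^2}\right|\leq\frac{c_*}{|t|^{1/2}}.$$ Moreover, for real $t\neq0$, $$\left|\frac{\Gamma(1+it)}{\Gamma(1+it/2)^2}\right|^2=\frac{2}{\pi}\frac{1}{t}\tanh(\pi t/2).$$
   Context: $\Gamma$ denotes Euler's gamma function. *)

theory Defs
  imports "HOL-Analysis.Analysis"
begin

definition c_star :: real where
  "c_star = 9 * exp 1 / (4 * sqrt 2 * pi)"

end

theory Submission
  imports Defs
begin


definition ph :: "real \<Rightarrow> real \<Rightarrow> real" where
  "ph T w = (4*w+T)^2/(w*(w+T))"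
definition rh :: "real \<Rightarrow> real \<Rightarrow> real" where
  "rh T w = ph T (max w (T/2))"

lemma ph_pos: "T > 0 \<Longrightarrow> w > 0 \<Longrightarrow> ph T w > 0"
  unfolding ph_def by (auto intro!: divide_pos_pos)

lemma ph_ge12: assumes "T > 0" "w > 0" shows "12 \<le> ph T w"
proof -
  have "12 * (w*(w+T)) \<le> (4*w+T)^2"
    using sum_squares_ge_zero[of "2*w-T" 0] by (simp add: power2_eq_square algebra_simps)
  then show ?thesis unfolding ph_def using assms by (simp add: pos_le_divide_eq)
qed

lemma ph_le16: assumes "T > 0" "w \<ge> T/2" shows "ph T w \<le> 16"
proof -
  have "T*T \<le> 8*w*T" using assms by (simp add: mult_right_mono)
  hence "(4*w+T)^2 \<le> 16 * (w*(w+T))" by (simp add: power2_eq_square algebra_simps)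
  then show ?thesis unfolding ph_def using assms by (simp add: pos_divide_le_eq)
qed

lemma ph_cross: "(4*b+(T::real))^2*(a*(a+T)) - (4*a+T)^2*(b*(b+T)) = T*(b-a)*(8*a*b - (a+b)*T - T*T)"
  by (simp add: power2_eq_square algebra_simps)

lemma ph_mono: assumes "T > 0" "T/2 \<le> a" "a \<le> b" shows "ph T a \<le> ph T b"
proof -
  define p where "p = a - T/2"
  define q where "q = b - T/2"
  have "p \<ge> 0" "q \<ge> 0" using assms by (auto simp: p_def q_def)
  have "8*a*b - (a+b)*T - T*T = 3*T*(p+q) + 8*p*q" by (simp add: p_def q_def algebra_simps)
  also have "\<dots> \<ge> 0" using \<open>p\<ge>0\<close> \<open>q\<ge>0\<close> assms by simp
  finally have "0 \<le> T*(b-a)*(8*a*b - (a+b)*T - T*T)" using assms by simp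
  hence "(4*a+T)^2*(b*(b+T)) \<le> (4*b+T)^2*(a*(a+T))" using ph_cross[of b T a] by simp
  moreover have "a > 0" "b > 0" using assms by auto
  ultimately show ?thesis unfolding ph_def using assms by (simp add: divide_simps)
qed

lemma ph_anti: assumes "T > 0" "0 < a" "a \<le> b" "b \<le> T/2" shows "ph T b \<le> ph T a"
proof -
  define p where "p = a - T/2"
  define q where "q = b - T/2"
  have pq: "p \<le> 0" "q \<le> 0" "p \<ge> -T/2" "q \<ge> -T/2" using assms by (auto simp: p_def q_def)
  have e: "8*a*b - (a+b)*T - T*T = p*(3*T+8*q) + 3*(T*q)" by (simp add: p_def q_def algebra_simps)
  have Tq: "T*q \<le> 0" using mult_nonneg_nonpos[of T q] assms pq by simp
  have TT: "T*T \<ge> 0" by simp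
  have Tq2: "T*(q + T/2) \<ge> 0" using assms pq by (intro mult_nonneg_nonneg) auto
  have Tq3: "T*(q + T/2) = T*q + (1/2)*(T*T)" by (simp add: algebra_simps)
  have "p*(3*T+8*q) + 3*(T*q) \<le> 0"
  proof (cases "3*T+8*q \<ge> 0")
    case True
    then have "p*(3*T+8*q) \<le> 0" using pq by (simp add: mult_nonpos_nonneg)
    then show ?thesis using Tq by linarith
  next
    case False
    have "(p + T/2)*(3*T+8*q) \<le> 0" using False pq by (intro mult_nonneg_nonpos) auto
    moreover have "(p + T/2)*(3*T+8*q) = p*(3*T+8*q) + (3/2)*(T*T) + 4*(T*q)" by (simp add: algebra_simps)
    ultimately have h1: "p*(3*T+8*q) + 3/2*(T*T) + 4*(T*q) \<le> 0" by simp
    have h2: "T*q + 1/2*(T*T) \<ge> 0" using Tq2 Tq3 by simp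
    have lin: "X + 3/2*Z + 4*Y \<le> 0 \<Longrightarrow> Y + 1/2*Z \<ge> 0 \<Longrightarrow> Z \<ge> 0 \<Longrightarrow> X + 3*Y \<le> (0::real)" for X Y Z
      by linarith
    show ?thesis by (rule lin[OF h1 h2 TT])
  qed
  hence n: "8*a*b - (a+b)*T - T*T \<le> 0" using e by simp
  have "T*(b-a) \<ge> 0" using assms by simp
  hence "T*(b-a)*(8*a*b - (a+b)*T - T*T) \<le> 0" using n by (rule mult_nonneg_nonpos)
  hence "(4*b+T)^2*(a*(a+T)) \<le> (4*a+T)^2*(b*(b+T))" using ph_cross[of b T a] by simp
  moreover have "a > 0" "b > 0" using assms by auto
  ultimately show ?thesis unfolding ph_def using assms by (simp add: divide_simps)
qed

lemma rh_bounds: assumes "T > 0" shows "12 \<le> rh T w" "rh T w \<le> 16"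
  unfolding rh_def using assms ph_ge12[of T "max w (T/2)"] ph_le16[of T "max w (T/2)"] by auto

lemma rh_mono: assumes "T > 0" "a \<le> b" shows "rh T a \<le> rh T b"
  unfolding rh_def using assms by (intro ph_mono) auto

lemma key: assumes "T > 0" "0 < u" "u \<le> v" shows "ph T v * rh T u \<le> ph T u * rh T v"
proof (cases "T/2 \<le> u")
  case True
  hence "max u (T/2) = u" "max v (T/2) = v" using assms by auto
  hence "rh T u = ph T u" "rh T v = ph T v" unfolding rh_def by simp_all
  then show ?thesis by (simp add: mult.commute)
next
  case F: False
  show ?thesis
  proof (cases "T/2 \<le> v")
    case True
    have "rh T u = 12" using F assms unfolding rh_def ph_def by (simp add: max_def field_simps power2_eq_square)
    moreover have "rh T v = ph T v" using True by (simp add: rh_def)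
    moreover have "12 \<le> ph T u" using ph_ge12 assms by simp
    moreover have "ph T v \<ge> 0" using ph_pos[of T v] assms by simp
    ultimately show ?thesis by (metis mult.commute mult_left_mono)
  next
    case False
    have "rh T u = rh T v" using F False unfolding rh_def by (simp add: max_def)
    moreover have "ph T v \<le> ph T u" using ph_anti[of T u v] False assms by simp
    moreover have "rh T v \<ge> 0" using rh_bounds[OF assms(1)] by (smt (verit))
    ultimately show ?thesis by (simp add: mult_right_mono)
  qed
qed



lemma sin_it: "sin (\<i> * complex_of_real y) = \<i> * complex_of_real (sinh y)"
  by (simp add: sin_i_times sinh_def exp_minus exp_of_real scaleR_conv_of_real of_real_def[symmetric] field_simps)

lemma Gamma_1_it_sq:
  fixes t :: real assumes "t \<noteq> 0"
  shows "(cmod (Gamma (1 + \<i> * complex_of_real t)))^2 = pi * t / sinh (pi * t)"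
proof -
  define z where "z = \<i> * complex_of_real t"
  have nz: "z \<notin> \<int>\<^sub>\<le>\<^sub>0" using assms unfolding z_def
    by (auto elim!: nonpos_Ints_cases simp: complex_eq_iff)
  have s0: "sinh (pi * t) \<noteq> 0" using assms by simp
  have "complex_of_real ((cmod (Gamma (1 + z)))^2) = Gamma (1+z) * Gamma (1 - z)"
    unfolding complex_norm_square by (simp add: cnj_Gamma z_def)
  also have "\<dots> = z * Gamma z * Gamma (1 - z)" using Gamma_plus1[OF nz] by (simp add: add.commute)
  also have "z * Gamma z * Gamma (1 - z) = z * (of_real pi / sin (of_real pi * z))"
    by (subst mult.assoc) (simp only: Gamma_reflection_complex)
  also have "of_real pi * z = \<i> * complex_of_real (pi * t)" by (simp add: z_def)
  also have "sin (\<i> * complex_of_real (pi * t)) = \<i> * complex_of_real (sinh (pi*t))" by (rule sin_it)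
  also have "z * (of_real pi / (\<i> * complex_of_real (sinh (pi*t)))) = complex_of_real (pi * t / sinh (pi*t))"
    using s0 by (simp add: z_def field_simps)
  finally show ?thesis unfolding z_def by (simp only: of_real_eq_iff)
qed


lemma aux: fixes p t a b :: real assumes "p \<noteq> 0" "t \<noteq> 0" "a \<noteq> 0" "b \<noteq> 0"
  shows "(p*t/(2*a*b))/(p*(t/2)/a)^2 = 2/p*(1/t)*(a/b)"
  using assms by (simp add: field_simps power2_eq_square)


lemma part2:
  fixes t :: real assumes "t \<noteq> 0"
  shows "(cmod (Gamma (1 + \<i> * complex_of_real t) /
                  (Gamma (1 + \<i> * complex_of_real (t / 2)))\<^sup>2))\<^sup>2
           = 2 / pi * (1 / t) * tanh (pi * t / 2)"
proof -
  define s where "s = pi * t / 2"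
  have t2: "t/2 \<noteq> 0" using assms by simp
  have a: "(cmod (Gamma (1 + \<i> * complex_of_real t)))^2 = pi * t / sinh (pi * t)"
    by (rule Gamma_1_it_sq[OF assms])
  have b: "(cmod (Gamma (1 + \<i> * complex_of_real (t/2))))^2 = pi * (t/2) / sinh (pi * (t/2))"
    by (rule Gamma_1_it_sq[OF t2])
  have sh: "sinh (pi * t) = 2 * sinh s * cosh s" unfolding s_def using sinh_double[of "pi*t/2"] by simp
  have s0: "sinh s \<noteq> 0" using assms by (simp add: s_def)
  have c0: "cosh s \<noteq> 0" by (smt (verit) cosh_real_pos)
  have "(cmod (Gamma (1 + \<i> * complex_of_real t) /
                  (Gamma (1 + \<i> * complex_of_real (t / 2)))\<^sup>2))\<^sup>2
       = (cmod (Gamma (1 + \<i> * complex_of_real t)))^2 / ((cmod (Gamma (1 + \<i> * complex_of_real (t/2))))^2)^2"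
    by (simp add: norm_divide norm_power power_divide power_mult[symmetric] mult.commute)
  also have "\<dots> = (pi * t / (2 * sinh s * cosh s)) / (pi * (t/2) / sinh s)^2"
    unfolding a b sh by (simp add: s_def)
  also have "\<dots> = 2 / pi * (1 / t) * (sinh s / cosh s)"
    by (rule aux[OF pi_neq_zero assms s0 c0])
  finally show ?thesis by (simp only: tanh_def s_def)
qed




lemma lnGamma_deriv: fixes c :: real assumes "c > 0"
  shows "((ln \<circ> Gamma) has_field_derivative Digamma c) (at c within {0<..})"
proof -
  have nz: "c \<notin> \<int>\<^sub>\<le>\<^sub>0" using assms by (auto elim!: nonpos_Ints_cases')
  have g: "Gamma c > 0" using assms by (rule Gamma_real_pos)
  have "((\<lambda>x. ln (Gamma x)) has_field_derivative (1 / Gamma c) * (Gamma c * Digamma c)) (at c within {0<..})"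
    by (rule DERIV_chain2[OF DERIV_ln_divide[OF g]
          has_field_derivative_at_within[OF has_field_derivative_Gamma[OF nz]]])
  then show ?thesis using g by (simp add: o_def)
qed

lemma Gamma_lb: fixes x :: real assumes "1 \<le> x" "x \<le> 2"
  shows "exp (-1/4) \<le> Gamma x"
proof -
  have cv: "convex_on {0<..} (ln \<circ> Gamma :: real \<Rightarrow> real)" by (rule log_convex_Gamma_real)
  have xin: "x \<in> {0<..}" using assms by simp
  have t1: "(ln \<circ> Gamma) x - (ln \<circ> Gamma) 1 \<ge> Digamma 1 * (x - 1)"
    by (rule convex_on_imp_above_tangent[OF cv _ _ xin lnGamma_deriv]) (auto simp: interior_open)
  have t2: "(ln \<circ> Gamma) x - (ln \<circ> Gamma) 2 \<ge> Digamma 2 * (x - 2)"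
    by (rule convex_on_imp_above_tangent[OF cv _ _ xin lnGamma_deriv]) (auto simp: interior_open)
  have G2: "Gamma (2::real) = 1" using Gamma_fact[of 1] by simp
  have D2: "Digamma (2::real) = 1 - euler_mascheroni"
    using Digamma_plus1[of "1::real"] by simp
  define g :: real where "g = euler_mascheroni"
  have g0: "0 < g" "g < 1" using euler_mascheroni_pos euler_mascheroni_less_13_over_22 by (auto simp: g_def)
  have l1: "ln (Gamma x) \<ge> -g * (x - 1)" using t1 by (simp add: g_def)
  have l2: "ln (Gamma x) \<ge> (1 - g) * (x - 2)" using t2 G2 D2 by (simp add: g_def)
  have "ln (Gamma x) \<ge> -1/4"
  proof (cases "x - 1 \<le> 1 - g")
    case True
    have "g * (x - 1) \<le> g * (1 - g)" using True g0 by (simp add: mult_left_mono)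
    also have "\<dots> \<le> 1/4" using sum_squares_ge_zero[of "g - 1/2" 0] by (simp add: power2_eq_square algebra_simps)
    finally show ?thesis using l1 by simp
  next
    case False
    have "(1 - g) * (2 - x) \<le> (1 - g) * g" using False g0 by (intro mult_left_mono) auto
    also have "\<dots> \<le> 1/4" using sum_squares_ge_zero[of "g - 1/2" 0] by (simp add: power2_eq_square algebra_simps)
    finally show ?thesis using l2 by (simp add: algebra_simps)
  qed
  hence "exp (-1/4) \<le> exp (ln (Gamma x))" by simp
  also have "\<dots> = Gamma x" using assms by (intro exp_ln Gamma_real_pos) auto
  finally show ?thesis .
qed



lemma prod_ineq: assumes "T > 0" "1 \<le> x" "x \<le> 2"
  shows "rh T 1 * (\<Prod>k<N. ph T ((x + real k)^2)) \<le> rh T ((1 + real N)^2) * (\<Prod>k<N. ph T ((1 + real k)^2))"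
proof (induction N)
  case 0
  then show ?case by simp
next
  case (Suc N)
  define u where "u = (1 + real N)^2"
  define v where "v = (x + real N)^2"
  define u' where "u' = (1 + real (Suc N))^2"
  have u0: "0 < u" unfolding u_def by simp
  have uv: "u \<le> v" unfolding u_def v_def using assms by (intro power_mono) auto
  have vu': "v \<le> u'" unfolding u'_def v_def using assms by (intro power_mono) auto
  have pv: "ph T v \<ge> 0" using ph_pos[of T v] assms u0 uv by simp
  have pu: "ph T u \<ge> 0" using ph_pos[of T u] assms u0 by simp
  have PU: "(\<Prod>k<N. ph T ((1 + real k)^2)) \<ge> 0"
    using ph_pos assms by (intro prod_nonneg) (auto intro: less_imp_le)
  have "rh T 1 * (\<Prod>k<Suc N. ph T ((x + real k)^2)) = (rh T 1 * (\<Prod>k<N. ph T ((x + real k)^2))) * ph T v"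
    by (simp add: v_def)
  also have "\<dots> \<le> (rh T u * (\<Prod>k<N. ph T ((1 + real k)^2))) * ph T v"
    using Suc.IH pv by (simp add: u_def mult_right_mono)
  also have "\<dots> = (ph T v * rh T u) * (\<Prod>k<N. ph T ((1 + real k)^2))" by simp
  also have "\<dots> \<le> (ph T u * rh T v) * (\<Prod>k<N. ph T ((1 + real k)^2))"
    using key[OF assms(1) u0 uv] PU by (rule mult_right_mono)
  also have "\<dots> \<le> (ph T u * rh T u') * (\<Prod>k<N. ph T ((1 + real k)^2))"
    using rh_mono[OF assms(1) vu'] pu PU by (intro mult_right_mono mult_left_mono) auto
  also have "\<dots> = rh T u' * (\<Prod>k<Suc N. ph T ((1 + real k)^2))"
    by (simp add: u_def u'_def)
  finally show ?case by (simp add: u'_def)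
qed

lemma prod_cor: assumes "T > 0" "1 \<le> x" "x \<le> 2"
  shows "(\<Prod>k<N. ph T ((x + real k)^2)) \<le> 4/3 * (\<Prod>k<N. ph T ((1 + real k)^2))"
proof -
  have PU: "(\<Prod>k<N. ph T ((1 + real k)^2)) \<ge> 0"
    using ph_pos assms by (intro prod_nonneg) (auto intro: less_imp_le)
  have r1: "12 \<le> rh T 1" and r2: "rh T ((1 + real N)^2) \<le> 16" using rh_bounds[OF assms(1)] by auto
  have "12 * (\<Prod>k<N. ph T ((x + real k)^2)) \<le> rh T 1 * (\<Prod>k<N. ph T ((x + real k)^2))"
    using r1 ph_pos assms by (intro mult_right_mono prod_nonneg) (auto intro: less_imp_le add_pos_nonneg)
  also have "\<dots> \<le> rh T ((1 + real N)^2) * (\<Prod>k<N. ph T ((1 + real k)^2))" by (rule prod_ineq[OF assms])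
  also have "\<dots> \<le> 16 * (\<Prod>k<N. ph T ((1 + real k)^2))" using r2 PU by (rule mult_right_mono)
  finally show ?thesis by simp
qed

lemma normGS: fixes x y :: real assumes "x > 0" "n > 0"
  shows "(cmod (Gamma_series (Complex x y) n))^2 = (fact n)^2 * (real n powr x)^2 / (\<Prod>k<n+1. (x + real k)^2 + y^2)"
proof -
  have e: "cmod (exp (Complex x y * of_real (ln (real n)))) = real n powr x"
    using assms by (simp add: norm_exp_eq_Re powr_def)
  have p: "cmod (pochhammer (Complex x y) (n+1)) = (\<Prod>k<n+1. cmod (Complex x y + of_nat k))"
    unfolding pochhammer_prod atLeast0LessThan by (rule prod_norm[symmetric])
  have q: "(cmod (Complex x y + of_nat k))^2 = (x + real k)^2 + y^2" for k
    by (simp add: cmod_def)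
  have "cmod (Gamma_series (Complex x y) n) = fact n * real n powr x / (\<Prod>k<n+1. cmod (Complex x y + of_nat k))"
    unfolding Gamma_series_def norm_divide norm_mult e p by simp
  hence "(cmod (Gamma_series (Complex x y) n))^2 = (fact n)^2 * (real n powr x)^2 / (\<Prod>k<n+1. (cmod (Complex x y + of_nat k))^2)"
    by (simp add: power_divide power_mult_distrib prod_power_distrib)
  then show ?thesis by (simp only: q)
qed

lemma GSr: fixes x :: real assumes "x > 0" "n > 0"
  shows "Gamma_series x n = fact n * real n powr x / (\<Prod>k<n+1. x + real k)"
  using assms unfolding Gamma_series_def by (simp add: powr_def pochhammer_prod atLeast0LessThan mult.commute)




lemma Fsq: fixes x t :: real assumes "x > 0" "n > 0" "t \<noteq> 0"
  shows "(cmod (Gamma_series (Complex x t) n) / (cmod (Gamma_series (Complex x (t/2)) n))^2)^2 * (Gamma_series x n)^2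
         = (\<Prod>k<n+1. ph (t^2) ((x + real k)^2)) / 16^(n+1)"
proof -
  define A where "A = (fact n :: real)"
  define p where "p = real n powr x"
  define Pt where "Pt = (\<Prod>k<n+1. (x + real k)^2 + t^2)"
  define Ph where "Ph = (\<Prod>k<n+1. (x + real k)^2 + (t/2)^2)"
  define Q where "Q = (\<Prod>k<n+1. x + real k)"
  have A0: "A > 0" by (simp add: A_def)
  have p0: "p > 0" using assms by (simp add: p_def)
  have Pt0: "Pt > 0" unfolding Pt_def using assms by (intro prod_pos) (auto intro: add_nonneg_pos)
  have Ph0: "Ph > 0" unfolding Ph_def using assms by (intro prod_pos) (auto intro: add_nonneg_pos)
  have Q0: "Q > 0" unfolding Q_def using assms by (intro prod_pos) auto
  have a: "(cmod (Gamma_series (Complex x t) n))^2 = A^2 * p^2 / Pt"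
    unfolding A_def p_def Pt_def by (rule normGS[OF assms(1,2)])
  have b: "(cmod (Gamma_series (Complex x (t/2)) n))^2 = A^2 * p^2 / Ph"
    unfolding A_def p_def Ph_def by (rule normGS[OF assms(1,2)])
  have c: "Gamma_series x n = A * p / Q" unfolding A_def p_def Q_def by (rule GSr[OF assms(1,2)])
  have "(cmod (Gamma_series (Complex x t) n) / (cmod (Gamma_series (Complex x (t/2)) n))^2)^2 * (Gamma_series x n)^2
      = (cmod (Gamma_series (Complex x t) n))^2 / ((cmod (Gamma_series (Complex x (t/2)) n))^2)^2 * (Gamma_series x n)^2"
    by (simp add: power_divide power_mult[symmetric] mult.commute)
  also have "\<dots> = (A^2 * p^2 / Pt) / (A^2 * p^2 / Ph)^2 * (A * p / Q)^2" unfolding a b c ..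
  also have "\<dots> = Ph^2 / (Q^2 * Pt)" using A0 p0 Pt0 Ph0 Q0 by (simp add: field_simps power2_eq_square)
  also have "\<dots> = (\<Prod>k<n+1. ph (t^2) ((x + real k)^2) / 16)"
  proof -
    have "(\<Prod>k<n+1. ph (t^2) ((x + real k)^2) / 16) = (\<Prod>k<n+1. ((x + real k)^2 + (t/2)^2)^2 / ((x + real k)^2 * ((x + real k)^2 + t^2)))"
      using assms by (intro prod.cong refl) (simp add: ph_def field_simps power2_eq_square)
    also have "\<dots> = Ph^2 / (Q^2 * Pt)"
      unfolding Ph_def Q_def Pt_def by (simp only: prod_power_distrib prod.distrib[symmetric] prod_dividef[symmetric])
    finally show ?thesis ..
  qed
  also have "\<dots> = (\<Prod>k<n+1. ph (t^2) ((x + real k)^2)) / 16^(n+1)"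
    by (simp add: prod_dividef)
  finally show ?thesis .
qed






lemma lim_s: fixes x t :: real assumes "x > 0" "t \<noteq> 0"
  shows "(\<lambda>n. (cmod (Gamma_series (Complex x t) n) / (cmod (Gamma_series (Complex x (t/2)) n))^2)^2 * (Gamma_series x n)^2)
     \<longlonglongrightarrow> (cmod (Gamma (Complex x t)) / (cmod (Gamma (Complex x (t/2))))^2)^2 * (Gamma x)^2"
proof -
  have "Complex x (t/2) \<notin> \<int>\<^sub>\<le>\<^sub>0" using assms by (auto elim!: nonpos_Ints_cases simp: complex_eq_iff)
  hence nz: "Gamma (Complex x (t/2)) \<noteq> 0" by (simp add: Gamma_eq_zero_iff)
  show ?thesis using nz by (intro tendsto_intros) auto
qed

lemma main_ineq: fixes x t :: real assumes "1 \<le> x" "x \<le> 2" "t \<noteq> 0"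
  shows "(cmod (Gamma (Complex x t)) / (cmod (Gamma (Complex x (t/2))))^2)^2 * (Gamma x)^2
     \<le> 4/3 * (cmod (Gamma (Complex 1 t)) / (cmod (Gamma (Complex 1 (t/2))))^2)^2"
proof -
  have T0: "t^2 > 0" using assms by simp
  have ev: "eventually (\<lambda>n. (cmod (Gamma_series (Complex x t) n) / (cmod (Gamma_series (Complex x (t/2)) n))^2)^2 * (Gamma_series x n)^2
     \<le> 4/3 * ((cmod (Gamma_series (Complex 1 t) n) / (cmod (Gamma_series (Complex 1 (t/2)) n))^2)^2 * (Gamma_series 1 n)^2)) sequentially"
  proof (rule eventually_sequentiallyI[of 1])
    fix n :: nat assume "1 \<le> n"
    hence n0: "n > 0" by simp
    have "(cmod (Gamma_series (Complex x t) n) / (cmod (Gamma_series (Complex x (t/2)) n))^2)^2 * (Gamma_series x n)^2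
        = (\<Prod>k<n+1. ph (t^2) ((x + real k)^2)) / 16^(n+1)" using assms n0 by (intro Fsq) auto
    also have "\<dots> \<le> (4/3 * (\<Prod>k<n+1. ph (t^2) ((1 + real k)^2))) / 16^(n+1)"
      by (intro divide_right_mono prod_cor[OF T0 assms(1,2)]) auto
    also have "\<dots> = 4/3 * ((cmod (Gamma_series (Complex 1 t) n) / (cmod (Gamma_series (Complex 1 (t/2)) n))^2)^2 * (Gamma_series 1 n)^2)"
      using Fsq[of 1 n t] assms n0 by simp
    finally show "(cmod (Gamma_series (Complex x t) n) / (cmod (Gamma_series (Complex x (t/2)) n))^2)^2 * (Gamma_series x n)^2
     \<le> 4/3 * ((cmod (Gamma_series (Complex 1 t) n) / (cmod (Gamma_series (Complex 1 (t/2)) n))^2)^2 * (Gamma_series 1 n)^2)" .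
  qed
  have l1: "(\<lambda>n. 4/3 * ((cmod (Gamma_series (Complex 1 t) n) / (cmod (Gamma_series (Complex 1 (t/2)) n))^2)^2 * (Gamma_series 1 n)^2))
      \<longlonglongrightarrow> 4/3 * ((cmod (Gamma (Complex 1 t)) / (cmod (Gamma (Complex 1 (t/2))))^2)^2 * (Gamma (1::real))^2)"
    using assms by (intro tendsto_mult tendsto_const lim_s) auto

  show ?thesis using tendsto_le[OF trivial_limit_sequentially l1 lim_s[of x t] ev] assms by simp
qed


lemma num_aux: fixes p h :: real assumes "p > 0" "256*p*h \<le> 243*h^4"
  shows "8/(3*p)*h \<le> 81*h^4/(32*p^2)"
proof -
  have e: "81*h^4/(32*p^2) - 8/(3*p)*h = (243*h^4 - 256*p*h)/(96*p^2)"
    using assms by (simp add: field_simps power2_eq_square)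
  have "(243*h^4 - 256*p*h)/(96*p^2) \<ge> 0" using assms by simp
  thus ?thesis using e by simp
qed

lemma tanh_bound: fixes t y :: real assumes "t \<noteq> 0"
  shows "(1/t) * tanh y \<le> 1 / \<bar>t\<bar>"
proof (cases "t > 0")
  case True
  have "(1/t) * tanh y \<le> (1/t) * 1" using tanh_real_lt_1[of y] True by (intro mult_left_mono) auto
  then show ?thesis using True by simp
next
  case False
  hence tn: "t < 0" using assms by simp
  have "(1/t) * tanh y \<le> (1/t) * (-1)" using tanh_real_gt_neg1[of y] tn
    by (intro mult_left_mono_neg) auto
  then show ?thesis using tn by simp
qed

lemma part1:
  fixes eps t :: real assumes e0: "0 \<le> eps" and e1: "eps < 1" and tb: "\<bar>t\<bar> > 4 * exp 1"
  shows "cmod (Gamma (1 + \<i> * complex_of_real t + complex_of_real eps) /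
                 (Gamma (1 + \<i> * complex_of_real (t / 2) + complex_of_real eps))\<^sup>2)
           \<le> c_star / \<bar>t\<bar> powr (1/2)"
proof -
  define x where "x = 1 + eps"
  have x1: "1 \<le> x" "x \<le> 2" using e0 e1 by (auto simp: x_def)
  have ta: "\<bar>t\<bar> > 0" using tb by (smt (verit) exp_gt_zero)
  hence t0: "t \<noteq> 0" by simp
  have z1: "1 + \<i> * complex_of_real t + complex_of_real eps = Complex x t" by (simp add: complex_eq_iff x_def)
  have z2: "1 + \<i> * complex_of_real (t/2) + complex_of_real eps = Complex x (t/2)" by (simp add: complex_eq_iff x_def)
  define Rx where "Rx = (cmod (Gamma (Complex x t)) / (cmod (Gamma (Complex x (t/2))))^2)^2"
  have c1: "Complex 1 t = 1 + \<i> * complex_of_real t" by (simp add: complex_eq_iff)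
  have c2: "Complex 1 (t/2) = 1 + \<i> * complex_of_real (t/2)" by (simp add: complex_eq_iff)
  have R1: "(cmod (Gamma (Complex 1 t)) / (cmod (Gamma (Complex 1 (t/2))))^2)^2 = 2 / pi * (1 / t) * tanh (pi * t / 2)"
    using part2[OF t0] unfolding c1 c2 by (simp add: norm_divide norm_power)
  have "2 / pi * ((1 / t) * tanh (pi * t / 2)) \<le> 2 / pi * (1 / \<bar>t\<bar>)"
    by (intro mult_left_mono tanh_bound t0) auto
  hence R1b: "(cmod (Gamma (Complex 1 t)) / (cmod (Gamma (Complex 1 (t/2))))^2)^2 \<le> 2 / (pi * \<bar>t\<bar>)"
    unfolding R1 by (simp add: mult.assoc)
  have M: "Rx * (Gamma x)^2 \<le> (8 / (3 * pi)) / \<bar>t\<bar>"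
  proof -
    have "4/3 * (2 / (pi * \<bar>t\<bar>)) = (8 / (3 * pi)) / \<bar>t\<bar>" by simp
    thus ?thesis using main_ineq[OF x1 t0] R1b unfolding Rx_def by linarith
  qed
  have Glb: "exp (-1/4) \<le> Gamma x" by (rule Gamma_lb[OF x1])
  have "exp (-1/4) ^ 2 \<le> (Gamma x)^2" using Glb by (intro power_mono) auto
  hence G2: "exp (-1/2) \<le> (Gamma x)^2" by (simp add: exp_of_nat_mult[symmetric])
  have Rx0: "Rx \<ge> 0" unfolding Rx_def by simp
  define h where "h = exp (1/2::real)"
  have "Rx * exp (-1/2) \<le> Rx * (Gamma x)^2" using G2 Rx0 by (rule mult_left_mono)
  also have "\<dots> \<le> (8 / (3 * pi)) / \<bar>t\<bar>" using M by simp
  finally have A1: "Rx * exp (-1/2) * h \<le> (8 / (3 * pi)) / \<bar>t\<bar> * h"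
    unfolding h_def by (intro mult_right_mono) auto
  have eh: "exp (-1/2::real) * h = 1" unfolding h_def by (simp add: exp_add[symmetric])
  have eqR: "Rx * exp (-1/2) * h = Rx" using eh by (simp add: mult.assoc)
  have eqT: "(8 / (3 * pi)) / \<bar>t\<bar> * h = (8 / (3 * pi) * h) / \<bar>t\<bar>" by simp
  have Rxb: "Rx \<le> (8 / (3 * pi) * h) / \<bar>t\<bar>" using A1 unfolding eqR eqT .
  have h1: "h \<ge> 3/2" unfolding h_def using exp_ge_add_one_self[of "1/2::real"] by simp
  have h3': "h^3 \<ge> (3/2)^3" using h1 by (intro power_mono) auto
  have h3: "h^3 \<ge> 27/8" using h3' by (simp add: power3_eq_cube)
  have "pi * 10000000000000 \<le> 31415926535899" using pi_approx(2) by simp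
  hence pi4: "pi \<le> 16/5" by linarith
  have p1: "256 * pi \<le> 243 * h^3" using pi4 h3 by linarith
  have "256 * pi * h \<le> 243 * h^3 * h" using p1 h1 by (intro mult_right_mono) auto
  moreover have h4: "h^4 = h^3 * h" by (simp add: eval_nat_numeral)
  ultimately have "256 * pi * h \<le> 243 * h^4" by (simp only: mult.assoc)
  hence num: "8 / (3 * pi) * h \<le> 81 * h^4 / (32 * pi^2)" by (intro num_aux) auto
  have e1h: "exp 1 = h^2" unfolding h_def by (simp add: exp_of_nat_mult[symmetric])
  have cs2: "c_star^2 = 81 * h^4 / (32 * pi^2)"
  proof -
    have "c_star^2 = (9*h^2)^2/(4 * sqrt 2 * pi)^2" unfolding c_star_def e1h by (simp add: power_divide)
    also have "(4 * sqrt 2 * pi)^2 = 32*pi^2" by (simp add: power_mult_distrib)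
    also have "(9*h^2)^2 = 81*h^4" by (simp add: power_mult_distrib power_mult[symmetric])
    finally show ?thesis .
  qed
  have sq: "(\<bar>t\<bar> powr (1/2))^2 = \<bar>t\<bar>" using ta by (simp add: powr_half_sqrt)
  have rhs2: "(c_star / \<bar>t\<bar> powr (1/2))^2 = (81 * h^4 / (32 * pi^2)) / \<bar>t\<bar>"
    by (simp only: power_divide sq cs2)
  have lhs2: "(cmod (Gamma (1 + \<i> * complex_of_real t + complex_of_real eps) /
                 (Gamma (1 + \<i> * complex_of_real (t / 2) + complex_of_real eps))\<^sup>2))^2 = Rx"
    unfolding z1 z2 Rx_def by (simp add: norm_divide norm_power)
  have fin: "Rx \<le> (81 * h^4 / (32 * pi^2)) / \<bar>t\<bar>"
    using Rxb divide_right_mono[OF num, of "\<bar>t\<bar>"] by simp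
  have cpos: "c_star \<ge> 0" unfolding c_star_def by simp
  show ?thesis
  proof (rule power2_le_imp_le)
    show "(cmod (Gamma (1 + \<i> * complex_of_real t + complex_of_real eps) /
                 (Gamma (1 + \<i> * complex_of_real (t / 2) + complex_of_real eps))\<^sup>2))^2
        \<le> (c_star / \<bar>t\<bar> powr (1/2))^2"
      unfolding lhs2 rhs2 by (rule fin)
    show "0 \<le> c_star / \<bar>t\<bar> powr (1/2)" using cpos by simp
  qed
qed

theorem lemma3p3:
  shows "(\<forall>(\<epsilon>::real) (t::real). 0 \<le> \<epsilon> \<and> \<epsilon> < 1 \<and> \<bar>t\<bar> > 4 * exp 1 \<longrightarrow>
           cmod (Gamma (1 + \<i> * complex_of_real t + complex_of_real \<epsilon>) /
                 (Gamma (1 + \<i> * complex_of_real (t / 2) + complex_of_real \<epsilon>))\<^sup>2)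
           \<le> c_star / \<bar>t\<bar> powr (1/2))
       \<and> (\<forall>t::real. t \<noteq> 0 \<longrightarrow>
           (cmod (Gamma (1 + \<i> * complex_of_real t) /
                  (Gamma (1 + \<i> * complex_of_real (t / 2)))\<^sup>2))\<^sup>2
           = 2 / pi * (1 / t) * tanh (pi * t / 2))"
  using part1 part2 by blast

end
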